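(* Let $\alpha\ge 0$, let $\mathbf{G}\subset\mathbb{R}^2$ be a ground-truth box (a closed oriented rectangle of positive area not containing the origin) and let $\mathbf{P}\subset\mathbb{R}^2$ be a prediction box (a closed oriented rectangle of positive area). Then $\mathsf{EC\text{-}IoU}(\mathbf{P},\mathbf{G}) = 1$ if and only if $\mathbf{P} = \mathbf{G}$.
   Context: $\rho(x,y)=\sqrt{x^2+y^2}$ is the distance to the origin (the ego position). For a ground-truth box $\mathbf{G}$ with center $(x_{\mathbf{G}},y_{\mathbf{G}})$, define the weight $\omega_{\mathbf{G}}(x,y) = \left[\rho(x_{\mathbf{G}},y_{\mathbf{G}})/\rho(x,y)\right]^{\alpha}$ for $(x,y)\in\mathbf{G}$. For a region $\mathbf{D}\subseteq\mathbf{G}$ let $\mathsf{Weighted\text{-}Area}_{\mathbf{G}}(\mathbf{D}) = \iint_{\mathbf{D}} \omega_{\mathbf{G}}(x,y)\,dA$, and for any region $\mathbf{D}$ let $\mathsf{Area}(\mathbf{D}) = \iint_{\mathbf{D}} 1\,dA$. The Ego-Centric IoU is $$\mathsf{EC\text{-}IoU}(\mathbf{P},\mathbf{G}) = \frac{\mathsf{Weighted\text{-}Area}_{\mathbf{G}}(\mathbf{P}\cap\mathbf{G})}{\mathsf{Weighted\text{-}Area}_{\mathbf{G}}(\mathbf{G}) + \mathsf{Area}(\mathbf{P}) - \mathsf{Area}(\mathbf{P}\cap\mathbf{G})}.$$ *)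

theory Defs
  imports "HOL-Analysis.Analysis"
begin

text \<open>An oriented box with center c, width w,
length l and heading angle th is the closed rectangle obtained by rotating
[-w/2, w/2] x [-l/2, l/2] by th and translating by c.\<close>

definition obox :: "real \<times> real \<Rightarrow> real \<Rightarrow> real \<Rightarrow> real \<Rightarrow> (real \<times> real) set" where
  "obox c w l th = {(fst c + cos th * s - sin th * t, snd c + sin th * s + cos th * t) | s t.
      \<bar>s\<bar> \<le> w / 2 \<and> \<bar>t\<bar> \<le> l / 2}"

definition rho :: "real \<times> real \<Rightarrow> real" where
  "rho p = sqrt ((fst p)\<^sup>2 + (snd p)\<^sup>2)"

definition ec_weight :: "real \<Rightarrow> real \<times> real \<Rightarrow> real \<times> real \<Rightarrow> real" where
  "ec_weight \<alpha> cG p = (rho cG / rho p) powr \<alpha>"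

definition weighted_area :: "real \<Rightarrow> real \<times> real \<Rightarrow> (real \<times> real) set \<Rightarrow> real" where
  "weighted_area \<alpha> cG D = integral D (ec_weight \<alpha> cG)"

definition area :: "(real \<times> real) set \<Rightarrow> real" where
  "area D = integral D (\<lambda>_. 1)"

definition ec_iou :: "real \<Rightarrow> (real \<times> real) set \<Rightarrow> real \<times> real \<Rightarrow> (real \<times> real) set \<Rightarrow> real" where
  "ec_iou \<alpha> P cG G =
     weighted_area \<alpha> cG (P \<inter> G) / (weighted_area \<alpha> cG G + area P - area (P \<inter> G))"

end

theory Submission imports Defs begin

lemma cont_compact_integrable:
  fixes f :: "real \<times> real \<Rightarrow> real"
  assumes "compact S" "continuous_on S f"
  shows "f integrable_on S"
proof -
  have "integrable lborel (\<lambda>x. indicator S x *\<^sub>R f x)"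
    by (rule borel_integrable_compact[OF assms])
  then have "(\<lambda>x. indicator S x *\<^sub>R f x) integrable_on UNIV"
    by (rule integrable_on_lborel)
  moreover have "(\<lambda>x. indicator S x *\<^sub>R f x) = (\<lambda>x. if x \<in> S then f x else 0)"
    by (auto simp: indicator_def)
  ultimately have "(\<lambda>x. if x \<in> S then f x else 0) integrable_on UNIV" by simp
  then show ?thesis by (simp add: integrable_restrict_UNIV)
qed

lemma obox_image:
  "obox c w l th = (\<lambda>p. c + (cos th * fst p - sin th * snd p, sin th * fst p + cos th * snd p))
      ` cbox (-w/2, -l/2) (w/2, l/2)" (is "_ = ?R")
proof
  show "obox c w l th \<subseteq> ?R"
  proof
    fix q assume "q \<in> obox c w l th"
    then obtain s t where q: "q = (fst c + cos th * s - sin th * t, snd c + sin th * s + cos th * t)"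
      and st: "\<bar>s\<bar> \<le> w / 2" "\<bar>t\<bar> \<le> l / 2" unfolding obox_def by blast
    have "(s,t) \<in> cbox (-w/2, -l/2) (w/2, l/2)" using st by (auto simp: cbox_Pair_eq)
    moreover have "q = c + (cos th * fst (s,t) - sin th * snd (s,t), sin th * fst (s,t) + cos th * snd (s,t))"
      using q by (cases c) simp
    ultimately show "q \<in> ?R" by blast
  qed
next
  show "?R \<subseteq> obox c w l th"
  proof
    fix q assume "q \<in> ?R"
    then obtain s t where st: "(s,t) \<in> cbox (-w/2, -l/2) (w/2, l/2)"
      and q: "q = c + (cos th * s - sin th * t, sin th * s + cos th * t)" by auto
    have "\<bar>s\<bar> \<le> w / 2" "\<bar>t\<bar> \<le> l / 2" using st by (auto simp: cbox_Pair_eq)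
    moreover have "q = (fst c + cos th * s - sin th * t, snd c + sin th * s + cos th * t)"
      using q by (cases c) simp
    ultimately show "q \<in> obox c w l th" unfolding obox_def by blast
  qed
qed

lemma obox_compact: "compact (obox c w l th)"
  unfolding obox_image
  by (intro compact_continuous_image continuous_intros compact_cbox)

lemma obox_convex: "convex (obox c w l th)"
proof -
  have lin: "linear (\<lambda>p::real\<times>real. (cos th * fst p - sin th * snd p, sin th * fst p + cos th * snd p))"
    by (auto simp: linear_iff algebra_simps)
  have "convex ((\<lambda>p::real\<times>real. (cos th * fst p - sin th * snd p, sin th * fst p + cos th * snd p)) ` cbox (-w/2, -l/2) (w/2, l/2))"
    by (rule convex_linear_image[OF lin convex_box(1)])
  then have "convex ((+) c ` (\<lambda>p::real\<times>real. (cos th * fst p - sin th * snd p, sin th * fst p + cos th * snd p)) ` cbox (-w/2, -l/2) (w/2, l/2))"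
    by (rule convex_translation)
  then show ?thesis unfolding obox_image image_comp by (simp add: o_def)
qed

lemma obox_center: "w \<ge> 0 \<Longrightarrow> l \<ge> 0 \<Longrightarrow> c \<in> obox c w l th"
proof -
  have "c = (fst c + cos th * 0 - sin th * 0, snd c + sin th * 0 + cos th * 0)" by simp
  moreover assume "w \<ge> 0" "l \<ge> 0"
  ultimately show ?thesis unfolding obox_def
    by (intro CollectI exI[of _ 0]) auto
qed

lemma obox_ball: assumes "w > 0" "l > 0" shows "ball c (min w l / 2) \<subseteq> obox c w l th"
proof
  fix q assume q: "q \<in> ball c (min w l / 2)"
  define dx where "dx = fst q - fst c"
  define dy where "dy = snd q - snd c"
  define s where "s = cos th * dx + sin th * dy"
  define t where "t = - sin th * dx + cos th * dy"
  have d: "dist c q = sqrt (dx^2 + dy^2)"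
    by (cases c, cases q) (simp add: dist_prod_def dist_real_def dx_def dy_def power2_commute)
  have st: "s^2 + t^2 = dx^2 + dy^2"
  proof -
    have "s^2 + t^2 = dx^2 * (sin th * sin th + cos th * cos th) + dy^2 * (sin th * sin th + cos th * cos th)"
      unfolding s_def t_def power2_eq_square by algebra
    moreover have "sin th * sin th + cos th * cos th = 1" by (metis sin_cos_squared_add power2_eq_square)
    ultimately show ?thesis by simp
  qed
  have one: "sin th * sin th + cos th * cos th = 1" by (metis sin_cos_squared_add power2_eq_square)
  have "s^2 \<le> dx^2 + dy^2" using st zero_le_power2[of t] by linarith
  then have "sqrt (s^2) \<le> sqrt (dx^2 + dy^2)" by (rule real_sqrt_le_mono)
  then have 1: "\<bar>s\<bar> \<le> sqrt (dx^2 + dy^2)" by simp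
  have "t^2 \<le> dx^2 + dy^2" using st zero_le_power2[of s] by linarith
  then have "sqrt (t^2) \<le> sqrt (dx^2 + dy^2)" by (rule real_sqrt_le_mono)
  then have 2: "\<bar>t\<bar> \<le> sqrt (dx^2 + dy^2)" by simp
  from 1 2 have "\<bar>s\<bar> \<le> w/2" "\<bar>t\<bar> \<le> l/2" using q d by auto
  moreover have "cos th * s - sin th * t = (sin th * sin th + cos th * cos th) * dx"
    unfolding s_def t_def by algebra
  then have "fst q = fst c + cos th * s - sin th * t"
    using one dx_def by simp
  moreover have "sin th * s + cos th * t = (sin th * sin th + cos th * cos th) * dy"
    unfolding s_def t_def by algebra
  then have "snd q = snd c + sin th * s + cos th * t"
    using one dy_def by simp
  ultimately show "q \<in> obox c w l th" unfolding obox_def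
    by (cases q) auto
qed

lemma obox_interior: assumes "w > 0" "l > 0" shows "interior (obox c w l th) \<noteq> {}"
proof -
  have "c \<in> interior (obox c w l th)"
    using obox_ball[OF assms, of c th] assms by (auto simp: mem_interior intro!: exI[of _ "min w l / 2"])
  then show ?thesis by blast
qed

lemma key:
  fixes f :: "real \<times> real \<Rightarrow> real"
  assumes S: "compact S" "convex S" "interior S \<noteq> {}"
  and D: "compact D" "D \<subseteq> S"
  and f: "continuous_on S f" "\<forall>x\<in>S. f x > 0"
  and eq: "integral S f \<le> integral D f"
  shows "D = S"
proof (rule ccontr)
  assume "D \<noteq> S" then obtain x where x: "x \<in> S" "x \<notin> D" using D by blast
  have xc: "x \<in> closure (interior S)" using convex_closure_interior[OF S(2,3)] x closure_subset by blast
  have op: "open (-D)" using compact_imp_closed D by auto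
  have "(-D) \<inter> closure (interior S) \<noteq> {}" using xc x by blast
  then have "(-D) \<inter> interior S \<noteq> {}" using open_Int_closure_eq_empty[OF op, of "interior S"] by blast
  then obtain y where y: "y \<in> interior S - D" by blast
  have "open (interior S - D)" using compact_imp_closed D by (intro open_Diff) auto
  from open_contains_cbox[OF this y] obtain a b where
    ab: "cbox a b \<subseteq> interior S - D" "\<forall>i\<in>Basis. a \<bullet> i < b \<bullet> i" by blast
  define C where "C = cbox a b"
  have CS: "C \<subseteq> S" using interior_subset ab C_def by blast
  have CD: "C \<inter> D = {}" using ab C_def by blast
  have Cne: "C \<noteq> {}" using ab(2) unfolding C_def box_ne_empty by (meson less_imp_le)
  have contC: "continuous_on C f" using f(1) CS continuous_on_subset by blast
  obtain z where z: "z \<in> C" "\<And>y. y \<in> C \<Longrightarrow> f z \<le> f y"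
    using continuous_attains_inf[OF _ Cne contC] C_def by auto
  have m: "f z > 0" using z CS f(2) by blast
  have intC: "f integrable_on C" using contC C_def by (intro cont_compact_integrable) auto
  have intD: "f integrable_on D" using D f(1) continuous_on_subset by (intro cont_compact_integrable) auto
  have intS: "f integrable_on S" using S f(1) by (intro cont_compact_integrable) auto
  have DCS: "D \<union> C \<subseteq> S" using D CS by blast
  have "compact (D \<union> C)" using D C_def by (intro compact_Un) auto
  then have intDC: "f integrable_on (D \<union> C)" using continuous_on_subset[OF f(1) DCS]
    by (intro cont_compact_integrable)
  have "(f has_integral (integral D f + integral C f)) (D \<union> C)"
    using CD by (intro has_integral_Un intD[THEN integrable_integral] intC[THEN integrable_integral]) (simp_all add: Int_commute)
  then have eqDC: "integral (D \<union> C) f = integral D f + integral C f" by (rule integral_unique)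
  have "integral C (\<lambda>_. f z) = f z * Henstock_Kurzweil_Integration.content C" unfolding C_def by simp
  moreover have "integral C (\<lambda>_. f z) \<le> integral C f"
    using z intC C_def by (intro integral_le) auto
  moreover have "Henstock_Kurzweil_Integration.content C > 0" unfolding C_def using ab(2) by (simp add: content_pos_lt_eq)
  ultimately have pos: "integral C f > 0" using m by (smt (verit) mult_pos_pos)
  have "integral (D \<union> C) f \<le> integral S f"
    using D CS intDC intS f(2) by (intro integral_subset_le) (auto intro: less_imp_le)
  then show False using eqDC pos eq by linarith
qed


theorem lemma3:
  fixes \<alpha> wG lG thG wP lP thP :: real and cG cP :: "real \<times> real"
  assumes "\<alpha> \<ge> 0"
    and "wG > 0" and "lG > 0" and "(0, 0) \<notin> obox cG wG lG thG"
    and "wP > 0" and "lP > 0"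
  shows "ec_iou \<alpha> (obox cP wP lP thP) cG (obox cG wG lG thG) = 1
     \<longleftrightarrow> obox cP wP lP thP = obox cG wG lG thG"
proof -
  define G where "G = obox cG wG lG thG"
  define P where "P = obox cP wP lP thP"
  define w where "w = ec_weight \<alpha> cG"
  have Gc: "compact G" "convex G" "interior G \<noteq> {}"
    unfolding G_def using assms by (auto simp: obox_compact obox_convex obox_interior)
  have Pc: "compact P" "convex P" "interior P \<noteq> {}"
    unfolding P_def using assms by (auto simp: obox_compact obox_convex obox_interior)
  have rpos: "rho p > 0" if "p \<in> G" for p
  proof -
    have "p \<noteq> (0,0)" using that assms(4) G_def by auto
    then have "(fst p)\<^sup>2 + (snd p)\<^sup>2 > 0"
      by (cases p) (auto simp: sum_power2_gt_zero_iff)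
    then show ?thesis unfolding rho_def by simp
  qed
  have cG: "cG \<in> G" unfolding G_def using assms by (intro obox_center) auto
  have rcG: "rho cG > 0" using rpos cG by blast
  have wpos: "\<forall>p\<in>G. w p > 0"
    using rpos rcG unfolding w_def ec_weight_def by (metis less_numeral_extra(3) powr_gt_zero zero_less_divide_iff)
  have rcont: "continuous_on G rho" unfolding rho_def by (intro continuous_intros)
  have nz1: "\<forall>p\<in>G. rho cG / rho p \<noteq> 0" using rpos rcG by (metis less_irrefl zero_less_divide_iff)
  have nz2: "\<forall>p\<in>G. rho p \<noteq> 0" using rpos by (metis less_irrefl)
  have wcont: "continuous_on G w" unfolding w_def ec_weight_def
    using nz1 nz2 rcont by (intro continuous_intros) auto
  have DG: "P \<inter> G \<subseteq> G" "P \<inter> G \<subseteq> P" by auto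
  have Dc: "compact (P \<inter> G)" using Pc Gc by (intro compact_Int) auto
  have c1: "continuous_on S (\<lambda>_. 1::real)" for S by (intro continuous_intros)
  have WD: "integral (P \<inter> G) w \<le> integral G w"
    using Dc Gc wcont wpos DG continuous_on_subset[OF wcont DG(1)]
    by (intro integral_subset_le cont_compact_integrable) (auto intro: less_imp_le)
  have AD: "integral (P \<inter> G) (\<lambda>_. 1::real) \<le> integral P (\<lambda>_. 1)"
    using Dc Pc c1 DG
    by (intro integral_subset_le cont_compact_integrable) auto
  have WG0: "integral G w \<ge> 0" using wpos Gc wcont by (intro integral_nonneg cont_compact_integrable) (auto intro: less_imp_le)
  have WGpos: "integral G w > 0"
  proof (rule ccontr)
    assume "\<not> integral G w > 0"
    then have "integral G w \<le> integral {} w" by simp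
    then have "{} = G" using Gc wcont wpos by (intro key) auto
    then show False using cG by blast
  qed
  have iou: "ec_iou \<alpha> P cG G = integral (P \<inter> G) w / (integral G w + integral P (\<lambda>_. 1) - integral (P \<inter> G) (\<lambda>_. 1))"
    unfolding ec_iou_def weighted_area_def area_def w_def ..
  show ?thesis unfolding G_def[symmetric] P_def[symmetric]
  proof
    assume h: "ec_iou \<alpha> P cG G = 1"
    have den: "integral G w + integral P (\<lambda>_. 1) - integral (P \<inter> G) (\<lambda>_. 1) > 0"
      using WGpos AD by linarith
    have "integral (P \<inter> G) w = integral G w + integral P (\<lambda>_. 1) - integral (P \<inter> G) (\<lambda>_. 1)"
      using h den iou by (simp add: divide_eq_1_iff)
    then have e1: "integral G w \<le> integral (P \<inter> G) w" and e2: "integral P (\<lambda>_. 1::real) \<le> integral (P \<inter> G) (\<lambda>_. 1)"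
      using WD AD by linarith+
    have "P \<inter> G = G" using Gc Dc DG wcont wpos e1 by (intro key) auto
    moreover have "P \<inter> G = P" using Pc Dc DG c1 e2 by (intro key) auto
    ultimately show "P = G" by blast
  next
    assume "P = G"
    then show "ec_iou \<alpha> P cG G = 1" using iou WGpos by simp
  qed
qed

end
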